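(* Let $X$ be a nonempty $T_0$-space and $Y$ a $T_0$-space. If the space $[X,Y]$ is $S^{\ast}$-well-filtered, then $Y$ is $S^{\ast}$-well-filtered.
   Context: $[X,Y]$ denotes the set $\mathrm{TOP}(X,Y)$ of continuous maps $X\to Y$ endowed with the Isbell topology, generated by the subbasic sets $N(H\leftarrow V)=\{f\mid f^{-1}(V)\in H\}$ where $H$ is a Scott open subset of the complete lattice $\mathcal{O}(X)$ of open sets of $X$ and $V$ is open in $Y$. For a space $Z$, ${\uparrow}$ is taken in the specialization order ($x\le y$ iff $x\in cl\{y\}$); $K(Z)$ is the set of nonempty compact saturated (= upper) subsets; a family in $K(Z)$ is filtered if any two members contain a common member. $Z$ is $S^{\ast}$-well-filtered if for every filtered family $\{K_i\mid i\in I\}\subseteq K(Z)$, every $G\in K(Z)$ and every nonempty open $U$, $\bigcap_{i}K_i\cap G\subseteq U$ implies $K_i\cap G\subseteq U$ for some $i$. *)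

theory Defs
  imports "HOL-Analysis.Analysis"
begin

definition scott_open_opens :: "'a topology \<Rightarrow> 'a set set \<Rightarrow> bool" where
  "scott_open_opens X H \<longleftrightarrow>
     H \<subseteq> {U. openin X U} \<and>
     (\<forall>U V. U \<in> H \<and> openin X V \<and> U \<subseteq> V \<longrightarrow> V \<in> H) \<and>
     (\<forall>D. D \<subseteq> {U. openin X U} \<and> D \<noteq> {} \<and>
          (\<forall>A\<in>D. \<forall>B\<in>D. \<exists>C\<in>D. A \<subseteq> C \<and> B \<subseteq> C) \<and> \<Union>D \<in> H
          \<longrightarrow> (\<exists>U\<in>D. U \<in> H))"

(* TOP(X,Y): continuous maps X -> Y, represented extensionally
   (value undefined outside topspace X) *)
definition cont_maps :: "'a topology \<Rightarrow> 'b topology \<Rightarrow> ('a \<Rightarrow> 'b) set" where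
  "cont_maps X Y = {f. continuous_map X Y f \<and> f \<in> extensional (topspace X)}"

definition isbell_subbasis :: "'a topology \<Rightarrow> 'b topology \<Rightarrow> ('a \<Rightarrow> 'b) set set" where
  "isbell_subbasis X Y =
     {{f \<in> cont_maps X Y. {x \<in> topspace X. f x \<in> V} \<in> H} | H V.
        scott_open_opens X H \<and> openin Y V}"

(* [X,Y]: TOP(X,Y) with the Isbell topology *)
definition isbell :: "'a topology \<Rightarrow> 'b topology \<Rightarrow> ('a \<Rightarrow> 'b) topology" where
  "isbell X Y = subtopology (topology_generated_by (isbell_subbasis X Y)) (cont_maps X Y)"

(* saturated = upper set in the specialization order (x \<le> y iff x \<in> cl{y}) *)
definition saturated :: "'a topology \<Rightarrow> 'a set \<Rightarrow> bool" where
  "saturated Z K \<longleftrightarrow> K \<subseteq> topspace Z \<and>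
     (\<forall>x\<in>K. \<forall>y\<in>topspace Z. x \<in> Z closure_of {y} \<longrightarrow> y \<in> K)"

definition KZ :: "'a topology \<Rightarrow> 'a set set" where
  "KZ Z = {K. K \<noteq> {} \<and> compactin Z K \<and> saturated Z K}"

definition filtered_family :: "'a set set \<Rightarrow> bool" where
  "filtered_family \<K> \<longleftrightarrow> \<K> \<noteq> {} \<and> (\<forall>A\<in>\<K>. \<forall>B\<in>\<K>. \<exists>C\<in>\<K>. C \<subseteq> A \<inter> B)"

definition S_star_well_filtered :: "'a topology \<Rightarrow> bool" where
  "S_star_well_filtered Z \<longleftrightarrow>
     (\<forall>\<K> G U. \<K> \<subseteq> KZ Z \<and> filtered_family \<K> \<and> G \<in> KZ Z \<and>
        openin Z U \<and> U \<noteq> {} \<and> \<Inter>\<K> \<inter> G \<subseteq> U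
        \<longrightarrow> (\<exists>K\<in>\<K>. K \<inter> G \<subseteq> U))"

end

theory Submission
  imports Defs
begin

definition upset :: "'a topology \<Rightarrow> 'a set \<Rightarrow> 'a set" where
  "upset Z A = {z \<in> topspace Z. \<exists>a\<in>A. a \<in> Z closure_of {z}}"

lemma spec_open:
  assumes "a \<in> Z closure_of {z}" "openin Z W" "a \<in> W"
  shows "z \<in> W"
  using assms by (auto simp: closure_of_def)

lemma spec_iff:
  "a \<in> Z closure_of {z} \<longleftrightarrow> a \<in> topspace Z \<and> (\<forall>T. openin Z T \<and> a \<in> T \<longrightarrow> z \<in> T)"
  by (auto simp: closure_of_def)

lemma subset_upset: "A \<subseteq> topspace Z \<Longrightarrow> A \<subseteq> upset Z A"
proof
  fix a assume "A \<subseteq> topspace Z" "a \<in> A"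
  then have "a \<in> Z closure_of {a}" unfolding spec_iff by blast
  then show "a \<in> upset Z A" unfolding upset_def using \<open>A \<subseteq> topspace Z\<close> \<open>a \<in> A\<close> by blast
qed

lemma upset_mono: "A \<subseteq> B \<Longrightarrow> upset Z A \<subseteq> upset Z B"
  unfolding upset_def by blast

lemma upset_saturated: "saturated Z (upset Z A)"
  unfolding saturated_def
proof (intro conjI ballI impI)
  show "upset Z A \<subseteq> topspace Z" unfolding upset_def by blast
  fix x y assume x: "x \<in> upset Z A" and y: "y \<in> topspace Z" and xy: "x \<in> Z closure_of {y}"
  obtain a where a: "a \<in> A" "a \<in> Z closure_of {x}" using x unfolding upset_def by blast
  have "a \<in> topspace Z" using a(2) by (simp add: spec_iff)
  moreover have "y \<in> T" if "openin Z T" "a \<in> T" for T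
    using spec_open[OF xy that(1) spec_open[OF a(2) that]] .
  ultimately have "a \<in> Z closure_of {y}" unfolding spec_iff by blast
  then show "y \<in> upset Z A" unfolding upset_def using y a(1) by blast
qed

lemma upset_compact:
  assumes "compactin Z A"
  shows "compactin Z (upset Z A)"
  unfolding compactin_def
proof (intro conjI allI impI)
  show "upset Z A \<subseteq> topspace Z" unfolding upset_def by blast
  fix \<U> assume H: "(\<forall>U\<in>\<U>. openin Z U) \<and> upset Z A \<subseteq> \<Union>\<U>"
  have At: "A \<subseteq> topspace Z" using assms compactin_subset_topspace by blast
  then have "A \<subseteq> \<Union>\<U>" using H subset_upset by blast
  moreover have "\<forall>\<U>. (\<forall>U\<in>\<U>. openin Z U) \<and> A \<subseteq> \<Union>\<U> \<longrightarrow> (\<exists>F. finite F \<and> F \<subseteq> \<U> \<and> A \<subseteq> \<Union>F)"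
    using assms unfolding compactin_def by (elim conjE)
  ultimately obtain F where F: "finite F" "F \<subseteq> \<U>" "A \<subseteq> \<Union>F"
    using H by (elim allE[where x=\<U>] impE) auto
  have "upset Z A \<subseteq> \<Union>F"
  proof
    fix z assume "z \<in> upset Z A"
    then obtain a where a: "a \<in> A" "a \<in> Z closure_of {z}" unfolding upset_def by blast
    then obtain W where W: "W \<in> F" "a \<in> W" using F by blast
    then have "openin Z W" using H F by blast
    then have "z \<in> W" using spec_open[OF a(2) _ W(2)] by blast
    then show "z \<in> \<Union>F" using W by blast
  qed
  then show "\<exists>F. finite F \<and> F \<subseteq> \<U> \<and> upset Z A \<subseteq> \<Union>F" using F by blast
qed


lemma cont_in: "f \<in> cont_maps X Y \<Longrightarrow> x \<in> topspace X \<Longrightarrow> f x \<in> topspace Y"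
  unfolding cont_maps_def continuous_map_def by blast
lemma cont_pre_open:
  "f \<in> cont_maps X Y \<Longrightarrow> openin Y V \<Longrightarrow> openin X {x \<in> topspace X. f x \<in> V}"
  unfolding cont_maps_def continuous_map_def by blast
lemma scott_all: "scott_open_opens X {U. openin X U}"
  unfolding scott_open_opens_def by auto
lemma subbasisI:
  "scott_open_opens X H \<Longrightarrow> openin Y V \<Longrightarrow>
   {f \<in> cont_maps X Y. {x \<in> topspace X. f x \<in> V} \<in> H} \<in> isbell_subbasis X Y"
  unfolding isbell_subbasis_def by (rule CollectI, intro exI conjI, rule refl, assumption+)
lemma cont_maps_sub: "cont_maps X Y \<subseteq> \<Union>(isbell_subbasis X Y)"
proof
  fix f assume f: "f \<in> cont_maps X Y"
  let ?S = "{g \<in> cont_maps X Y. {x \<in> topspace X. g x \<in> topspace Y} \<in> {U. openin X U}}"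
  have "?S \<in> isbell_subbasis X Y"
    using subbasisI[OF scott_all openin_topspace] .
  moreover have "f \<in> ?S"
    using f cont_pre_open[OF f openin_topspace] unfolding mem_Collect_eq by (intro conjI)
  ultimately show "f \<in> \<Union>(isbell_subbasis X Y)" by (rule UnionI)
qed
lemma topspace_isbell: "topspace (isbell X Y) = cont_maps X Y"
  unfolding isbell_def topspace_subtopology topology_generated_by_topspace
  by (rule Int_absorb1[OF cont_maps_sub])
lemma scott_pt: "scott_open_opens X {U. openin X U \<and> x0 \<in> U}"
  unfolding scott_open_opens_def by auto
lemma eval_open:
  assumes x0: "x0 \<in> topspace X" and V: "openin Y V"
  shows "openin (isbell X Y) {f \<in> cont_maps X Y. f x0 \<in> V}"
proof -
  let ?S = "{f \<in> cont_maps X Y. {x \<in> topspace X. f x \<in> V} \<in> {U. openin X U \<and> x0 \<in> U}}"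
  have "?S \<in> isbell_subbasis X Y"
    by (rule subbasisI[OF scott_pt V])
  then have o: "openin (topology_generated_by (isbell_subbasis X Y)) ?S"
    by (rule topology_generated_by_Basis)
  have e: "?S = {f \<in> cont_maps X Y. f x0 \<in> V}"
  proof (rule Collect_cong)
    fix f
    show "(f \<in> cont_maps X Y \<and> {x \<in> topspace X. f x \<in> V} \<in> {U. openin X U \<and> x0 \<in> U}) =
          (f \<in> cont_maps X Y \<and> f x0 \<in> V)"
      using cont_pre_open[OF _ V, of f X] x0 by blast
  qed
  have "?S = ?S \<inter> cont_maps X Y" by blast
  then have "openin (isbell X Y) ?S" unfolding isbell_def openin_subtopology using o by blast
  then show ?thesis unfolding e .
qed
lemma eval_spec:
  assumes x0: "x0 \<in> topspace X" and g: "g \<in> isbell X Y closure_of {f}"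
  shows "g x0 \<in> Y closure_of {f x0}"
proof -
  have gC: "g \<in> cont_maps X Y" using g unfolding in_closure_of topspace_isbell by blast
  have "g x0 \<in> topspace Y" using cont_in[OF gC x0] .
  moreover have "f x0 \<in> T" if "openin Y T" "g x0 \<in> T" for T
  proof -
    have "g \<in> {f \<in> cont_maps X Y. f x0 \<in> T}" using gC that(2) by blast
    then have "f \<in> {f \<in> cont_maps X Y. f x0 \<in> T}" by (rule spec_open[OF g eval_open[OF x0 that(1)]])
    then show ?thesis by blast
  qed
  ultimately show ?thesis unfolding spec_iff by blast
qed
definition constf :: "'a topology \<Rightarrow> 'b \<Rightarrow> 'a \<Rightarrow> 'b" where
  "constf X y = restrict (\<lambda>_. y) (topspace X)"

lemma constf_cont: "y \<in> topspace Y \<Longrightarrow> constf X y \<in> cont_maps X Y"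
  unfolding cont_maps_def constf_def
  by (auto intro: continuous_map_eq[OF continuous_map_const[THEN iffD2]])

lemma constf_pre:
  "{x \<in> topspace X. constf X y x \<in> V} = (if y \<in> V then topspace X else {})"
  unfolding constf_def by auto

lemma constf_continuous: "continuous_map Y (isbell X Y) (constf X)"
proof -
  have im: "constf X ` topspace Y \<subseteq> cont_maps X Y" using constf_cont by (auto intro: constf_cont)
  have "continuous_map Y (topology_generated_by (isbell_subbasis X Y)) (constf X)"
  proof (rule continuous_on_generated_topo)
    fix U assume "U \<in> isbell_subbasis X Y"
    then obtain H V where HV: "scott_open_opens X H" "openin Y V"
      "U = {f \<in> cont_maps X Y. {x \<in> topspace X. f x \<in> V} \<in> H}"
      unfolding isbell_subbasis_def by blast
    have eq: "constf X -` U \<inter> topspace Y = {y \<in> topspace Y. (if y \<in> V then topspace X else {}) \<in> H}"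
      unfolding HV(3) by (auto simp: constf_pre constf_cont)
    have tX: "openin X (topspace X)" by simp
    show "openin Y (constf X -` U \<inter> topspace Y)"
    proof (cases "{} \<in> H")
      case True
      then have "topspace X \<in> H" using HV(1) tX unfolding scott_open_opens_def by blast
      then show ?thesis unfolding eq using True by (simp add: if_distrib)
    next
      case False
      show ?thesis
      proof (cases "topspace X \<in> H")
        case True
        then have "{y \<in> topspace Y. (if y \<in> V then topspace X else {}) \<in> H} = V"
          using False openin_subset[OF HV(2)] by auto
        then show ?thesis unfolding eq using HV(2) by simp
      next
        case False2: False
        then have "{y \<in> topspace Y. (if y \<in> V then topspace X else {}) \<in> H} = {}"
          using False by auto
        then have "constf X -` U \<inter> topspace Y = {}" using eq by simp
        then show ?thesis by simp
      qed
    qed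
  next
    show "constf X ` topspace Y \<subseteq> \<Union>(isbell_subbasis X Y)" using subset_trans[OF im cont_maps_sub] .
  qed
  then show ?thesis unfolding isbell_def continuous_map_in_subtopology
    using im by (simp add: image_subset_iff_funcset)
qed


theorem mainTheorem18:
  fixes X :: "'a topology" and Y :: "'b topology"
  assumes "t0_space X" and "topspace X \<noteq> {}" and "t0_space Y"
    and "S_star_well_filtered (isbell X Y)"
  shows "S_star_well_filtered Y"
  unfolding S_star_well_filtered_def
proof (intro allI impI)
  fix \<K> G U
  assume A: "\<K> \<subseteq> KZ Y \<and> filtered_family \<K> \<and> G \<in> KZ Y \<and> openin Y U \<and> U \<noteq> {} \<and> \<Inter>\<K> \<inter> G \<subseteq> U"
  have A1: "\<K> \<subseteq> KZ Y" and A2: "filtered_family \<K>" and A3: "G \<in> KZ Y"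
    and A4: "openin Y U" and A5: "U \<noteq> {}" and A6: "\<Inter>\<K> \<inter> G \<subseteq> U" using A by auto
  obtain x0 where x0: "x0 \<in> topspace X" using assms(2) by blast
  let ?I = "isbell X Y"
  let ?c = "constf X"
  let ?up = "\<lambda>K. upset ?I (?c ` K)"
  have cx0: "?c y x0 = y" for y :: 'b using x0 unfolding constf_def by simp
  have KI: "?up K \<in> KZ ?I" if "K \<in> KZ Y" for K
  proof -
    have K: "K \<noteq> {}" "compactin Y K" using that unfolding KZ_def by auto
    have sub: "?c ` K \<subseteq> topspace ?I"
      using subset_trans[OF image_mono[OF compactin_subset_topspace[OF K(2)]]
              continuous_map_image_subset_topspace[OF constf_continuous]] .
    have "compactin ?I (?c ` K)" using image_compactin[OF K(2) constf_continuous] .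
    then show ?thesis unfolding KZ_def using upset_compact upset_saturated subset_upset[OF sub] K(1) by blast
  qed
  have up_in: "?c y \<in> ?up K" if "y \<in> K" "K \<in> KZ Y" for y K
  proof -
    have "compactin Y K" using that unfolding KZ_def by auto
    then have "?c ` K \<subseteq> topspace ?I"
      using subset_trans[OF image_mono[OF compactin_subset_topspace] 
              continuous_map_image_subset_topspace[OF constf_continuous]] by blast
    then show ?thesis using subset_upset that(1) by blast
  qed
  have key: "f x0 \<in> K" if "f \<in> ?up K" "K \<in> KZ Y" for f K
  proof -
    from that(1) obtain k where k: "k \<in> K" "?c k \<in> ?I closure_of {f}" and fC: "f \<in> cont_maps X Y"
      unfolding upset_def topspace_isbell by blast
    have "k \<in> Y closure_of {f x0}" using eval_spec[OF x0 k(2)] cx0 by simp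
    moreover have "f x0 \<in> topspace Y" using fC x0 unfolding cont_maps_def continuous_map_def by blast
    ultimately show ?thesis using that(2) k(1) unfolding KZ_def saturated_def by blast
  qed
  define \<K>' where "\<K>' = ?up ` \<K>"
  define U' where "U' = {f \<in> cont_maps X Y. f x0 \<in> U}"
  have "\<K>' \<subseteq> KZ ?I" unfolding \<K>'_def using A KI by blast
  moreover have "filtered_family \<K>'"
    unfolding filtered_family_def
  proof (intro conjI ballI)
    show "\<K>' \<noteq> {}" using A unfolding \<K>'_def filtered_family_def by blast
    fix P Q assume "P \<in> \<K>'" "Q \<in> \<K>'"
    then obtain K1 K2 where "K1 \<in> \<K>" "K2 \<in> \<K>" "P = ?up K1" "Q = ?up K2" unfolding \<K>'_def by blast
    moreover then obtain K3 where "K3 \<in> \<K>" "K3 \<subseteq> K1 \<inter> K2" using A unfolding filtered_family_def by blast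
    ultimately show "\<exists>C\<in>\<K>'. C \<subseteq> P \<inter> Q" unfolding \<K>'_def
      using upset_mono[of "?c ` K3"] by (metis (no_types, lifting) Int_subset_iff image_eqI image_mono)
  qed
  moreover have "?up G \<in> KZ ?I" using A KI by blast
  moreover have "openin ?I U'" unfolding U'_def by (rule eval_open[OF x0 A4])
  moreover have "U' \<noteq> {}"
  proof -
    obtain u where "u \<in> U" using A by blast
    then have "u \<in> topspace Y" using A openin_subset by blast
    then have "?c u \<in> U'" unfolding U'_def using constf_cont cx0 \<open>u \<in> U\<close> by auto
    then show ?thesis by blast
  qed
  moreover have "\<Inter>\<K>' \<inter> ?up G \<subseteq> U'"
  proof
    fix f assume f: "f \<in> \<Inter>\<K>' \<inter> ?up G"
    have fC: "f \<in> cont_maps X Y" using f unfolding upset_def topspace_isbell by blast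
    have "f x0 \<in> K" if "K \<in> \<K>" for K using f that key A unfolding \<K>'_def by blast
    moreover have "f x0 \<in> G" using f key A by blast
    ultimately have "f x0 \<in> U" using A by blast
    then show "f \<in> U'" unfolding U'_def using fC by blast
  qed
  ultimately obtain K' where K': "K' \<in> \<K>'" "K' \<inter> ?up G \<subseteq> U'"
    using assms(4) unfolding S_star_well_filtered_def by blast
  then obtain K where K: "K \<in> \<K>" "K' = ?up K" unfolding \<K>'_def by blast
  show "\<exists>K\<in>\<K>. K \<inter> G \<subseteq> U"
  proof (intro bexI[OF _ K(1)] subsetI)
    fix y assume y: "y \<in> K \<inter> G"
    have "?c y \<in> K'" using up_in y K A by blast
    moreover have "?c y \<in> ?up G" using up_in y A by blast
    ultimately have "?c y \<in> U'" using K' by blast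
    then show "y \<in> U" unfolding U'_def using cx0 by simp
  qed
qed

end
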